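(* Let $E$ be an ordered Banach space, let $A>0$, let $n\geq 1$ be an integer, and let $f:[0,A]\rightarrow E$ be a continuous $n$-convex function. Then for all $x_{1},\ldots,x_{n}\geq 0$ with $\sum_{i=1}^{n}x_{i}\leq A$, \[ f\Bigl(\sum_{i=1}^{n}x_{i}\Bigr)-\sum_{1\leq i_{1}<\cdots<i_{n-1}\leq n}f(x_{i_{1}}+\cdots+x_{i_{n-1}})+\sum_{1\leq i_{1}<\cdots<i_{n-2}\leq n}f(x_{i_{1}}+\cdots+x_{i_{n-2}})-\cdots+(-1)^{n-1}\sum_{i=1}^{n}f(x_{i})\geq(-1)^{n-1}f(0). \] Equivalently, $\sum_{\varepsilon_{1},\ldots,\varepsilon_{n}\in\{0,1\}}(-1)^{n-(\varepsilon_{1}+\cdots+\varepsilon_{n})}f(\varepsilon_{1}x_{1}+\cdots+\varepsilon_{n}x_{n})\geq 0$.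
   Context: An ordered Banach space is a Banach space $E$ with the order $x\leq y$ iff $y-x\in E_{+}$, where $E_{+}$ is a closed convex cone with $E=E_{+}-E_{+}$, $(-E_{+})\cap E_{+}=\{0\}$, and $0\leq x\leq y$ implies $\|x\|\leq\|y\|$. For distinct points $x_0,\ldots,x_n$ of an interval, the divided difference is $[x_{0},\ldots,x_{n};f]=\sum_{j=0}^{n}\frac{f(x_{j})}{\prod_{k\neq j}(x_{j}-x_{k})}$. A function $f$ (real- or $E$-valued) on an interval is $n$-convex if all its divided differences of order $n$ (on $n+1$ distinct points) are $\geq 0$. *)

theory Defs
  imports "HOL-Analysis.Analysis"
begin

text \<open>The positive cone K of an ordered Banach space E (a real Banach space):
  a closed convex cone, generating, pointed, with monotone norm.\<close>
definition ordered_banach_cone :: "'a::banach set \<Rightarrow> bool" where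
  "ordered_banach_cone K \<longleftrightarrow>
     closed K \<and> convex_cone K \<and>
     (\<forall>z. \<exists>a\<in>K. \<exists>b\<in>K. z = a - b) \<and>
     (uminus ` K) \<inter> K = {0} \<and>
     (\<forall>x y. x \<in> K \<and> y - x \<in> K \<longrightarrow> norm x \<le> norm y)"

definition divdiff :: "(nat \<Rightarrow> real) \<Rightarrow> nat \<Rightarrow> (real \<Rightarrow> 'a::real_vector) \<Rightarrow> 'a" where
  "divdiff x n f = (\<Sum>j\<le>n. (1 / (\<Prod>k\<in>{..n} - {j}. (x j - x k))) *\<^sub>R f (x j))"

definition n_convex_on :: "'a::real_vector set \<Rightarrow> nat \<Rightarrow> real set \<Rightarrow> (real \<Rightarrow> 'a) \<Rightarrow> bool" where
  "n_convex_on K n I f \<longleftrightarrow>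
     (\<forall>x. (\<forall>i\<le>n. x i \<in> I) \<and> inj_on x {..n} \<longrightarrow> divdiff x n f \<in> K)"

end

theory Submission
  imports Defs
begin

definition DD :: "real set \<Rightarrow> (real \<Rightarrow> 'a::real_vector) \<Rightarrow> 'a" where
  "DD P f = (\<Sum>p\<in>P. (1 / (\<Prod>q\<in>P - {p}. (p - q))) *\<^sub>R f p)"

definition convS :: "'a::real_vector set \<Rightarrow> nat \<Rightarrow> real set \<Rightarrow> (real \<Rightarrow> 'a) \<Rightarrow> bool" where
  "convS K m I f \<longleftrightarrow> (\<forall>P. finite P \<and> card P = Suc m \<and> P \<subseteq> I \<longrightarrow> DD P f \<in> K)"

lemma divdiff_DD:
  assumes "inj_on x {..n}"
  shows "divdiff x n f = DD (x ` {..n}) f"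
proof -
  have "DD (x ` {..n}) f = (\<Sum>j\<le>n. (1 / (\<Prod>q\<in>x ` {..n} - {x j}. (x j - q))) *\<^sub>R f (x j))"
    unfolding DD_def using assms by (simp add: sum.reindex)
  also have "\<dots> = divdiff x n f"
    unfolding divdiff_def
  proof (rule sum.cong[OF refl])
    fix j assume j: "j \<in> {..n}"
    have "x ` {..n} - {x j} = x ` ({..n} - {j})"
      using assms j by (simp add: inj_on_image_set_diff)
    moreover have "inj_on x ({..n} - {j})" using assms by (rule inj_on_subset) auto
    ultimately show "(1 / (\<Prod>q\<in>x ` {..n} - {x j}. (x j - q))) *\<^sub>R f (x j) =
         (1 / (\<Prod>k\<in>{..n} - {j}. (x j - x k))) *\<^sub>R f (x j)"
      by (simp add: prod.reindex)
  qed
  finally show ?thesis by simp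
qed

lemma nconv_convS:
  assumes "n_convex_on K n I f" shows "convS K n I f"
  unfolding convS_def
proof (intro allI impI)
  fix P assume P: "finite P \<and> card P = Suc n \<and> P \<subseteq> I"
  then obtain x where b: "bij_betw x {0..<Suc n} P" using ex_bij_betw_nat_finite by metis
  have e: "{0..<Suc n} = {..n}" by auto
  have "inj_on x {..n}" "x ` {..n} = P" using b e by (auto simp: bij_betw_def)
  moreover have "\<forall>i\<le>n. x i \<in> I" using P calculation by auto
  ultimately show "DD P f \<in> K" using assms divdiff_DD unfolding n_convex_on_def by metis
qed

lemma DD_shift:
  "DD P (\<lambda>t. f (t + h) - f t) = DD ((\<lambda>t. t + h) ` P) f - DD P f"
proof -
  have inj: "inj_on (\<lambda>t. t + h) A" for A :: "real set" by (auto simp: inj_on_def)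
  have "DD ((\<lambda>t. t + h) ` P) f = (\<Sum>p\<in>P. (1 / (\<Prod>q\<in>(\<lambda>t. t + h) ` P - {p + h}. (p + h - q))) *\<^sub>R f (p + h))"
    unfolding DD_def by (simp add: sum.reindex[OF inj])
  also have "\<dots> = (\<Sum>p\<in>P. (1 / (\<Prod>q\<in>P - {p}. (p - q))) *\<^sub>R f (p + h))"
  proof (rule sum.cong[OF refl])
    fix p assume "p \<in> P"
    have "(\<lambda>t. t + h) ` P - {p + h} = (\<lambda>t. t + h) ` (P - {p})" by auto
    then show "(1 / (\<Prod>q\<in>(\<lambda>t. t + h) ` P - {p + h}. (p + h - q))) *\<^sub>R f (p + h) =
      (1 / (\<Prod>q\<in>P - {p}. (p - q))) *\<^sub>R f (p + h)"
      by (simp add: prod.reindex[OF inj])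
  qed
  finally show ?thesis unfolding DD_def
    by (simp add: scaleR_diff_right sum_subtractf)
qed

lemma DD_rec:
  assumes "finite P" "a \<notin> P" "b \<notin> P" "a \<noteq> b"
  shows "DD (insert b P) f - DD (insert a P) f = (b - a) *\<^sub>R DD (insert a (insert b P)) f"
proof -
  define Q where "Q p = (\<Prod>q\<in>P - {p}. (p - q))" for p
  have Qnz: "p \<in> P \<Longrightarrow> Q p \<noteq> 0" for p unfolding Q_def using assms(1) by auto
  have pa: "p \<in> P \<Longrightarrow> p - a \<noteq> 0" "p \<in> P \<Longrightarrow> p - b \<noteq> 0" for p using assms by auto
  have Pa: "(\<Prod>q\<in>P. (a - q)) \<noteq> 0" "(\<Prod>q\<in>P. (b - q)) \<noteq> 0" using assms by auto
  have i1: "insert c P - {p} = insert c (P - {p})" if "p \<in> P" "c \<notin> P" for p c using that by auto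
  have i2: "insert a (insert b P) - {p} = insert a (insert b (P - {p}))" if "p \<in> P" for p
    using that assms by auto
  have Db: "DD (insert b P) f = (1 / (\<Prod>q\<in>P. (b - q))) *\<^sub>R f b +
      (\<Sum>p\<in>P. (1 / ((p - b) * Q p)) *\<^sub>R f p)"
    unfolding DD_def Q_def using assms
    by (simp add: i1 cong: sum.cong)
  have Da: "DD (insert a P) f = (1 / (\<Prod>q\<in>P. (a - q))) *\<^sub>R f a +
      (\<Sum>p\<in>P. (1 / ((p - a) * Q p)) *\<^sub>R f p)"
    unfolding DD_def Q_def using assms
    by (simp add: i1 cong: sum.cong)
  have ab1: "insert a (insert b P) - {a} = insert b P" using assms by auto
  have ab2: "insert a (insert b P) - {b} = insert a P" using assms by auto
  have Dab: "DD (insert a (insert b P)) f = (1 / ((a - b) * (\<Prod>q\<in>P. (a - q)))) *\<^sub>R f a +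
      ((1 / ((b - a) * (\<Prod>q\<in>P. (b - q)))) *\<^sub>R f b +
      (\<Sum>p\<in>P. (1 / ((p - a) * ((p - b) * Q p))) *\<^sub>R f p))"
    unfolding DD_def Q_def using assms
    by (simp add: i2 ab1 ab2 cong: sum.cong)
  have s: "(\<Sum>p\<in>P. (1 / ((p - b) * Q p)) *\<^sub>R f p) - (\<Sum>p\<in>P. (1 / ((p - a) * Q p)) *\<^sub>R f p)
     = (b - a) *\<^sub>R (\<Sum>p\<in>P. (1 / ((p - a) * ((p - b) * Q p))) *\<^sub>R f p)"
    unfolding sum_subtractf[symmetric] scaleR_sum_right
  proof (rule sum.cong[OF refl])
    fix p assume p: "p \<in> P"
    have "1 / ((p - b) * Q p) - 1 / ((p - a) * Q p) = (b - a) * (1 / ((p - a) * ((p - b) * Q p)))"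
      using Qnz[OF p] pa[OF p] by (simp add: divide_simps)
    then show "(1 / ((p - b) * Q p)) *\<^sub>R f p - (1 / ((p - a) * Q p)) *\<^sub>R f p =
          (b - a) *\<^sub>R (1 / ((p - a) * ((p - b) * Q p))) *\<^sub>R f p"
      by (simp add: scaleR_diff_left[symmetric])
  qed
  have c1: "(b - a) * (1 / ((a - b) * (\<Prod>q\<in>P. (a - q)))) = - (1 / (\<Prod>q\<in>P. (a - q)))"
    using Pa assms(4) by (simp add: field_simps)
  have c2: "(b - a) * (1 / ((b - a) * (\<Prod>q\<in>P. (b - q)))) = (1 / (\<Prod>q\<in>P. (b - q)))"
    using Pa assms(4) by (simp add: field_simps)
  show ?thesis unfolding Db Da Dab scaleR_right_distrib scaleR_scaleR c1 c2 s[symmetric]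
    by (simp add: algebra_simps)
qed

lemma shift:
  assumes K: "convex_cone K" and cv: "convS K (Suc m) I f" and h: "h \<ge> 0"
    and J: "\<forall>t\<in>J. t \<in> I \<and> t + h \<in> I"
  shows "convS K m J (\<lambda>t. f (t + h) - f t)"
  unfolding convS_def
proof (intro allI impI)
  fix P assume P: "finite P \<and> card P = Suc m \<and> P \<subseteq> J"
  show "DD P (\<lambda>t. f (t + h) - f t) \<in> K"
  proof (cases "h = 0")
    case True
    then show ?thesis using K by (simp add: DD_def convex_cone_contains_0)
  next
    case False
    with h have hp: "h > 0" by simp
    define sh where "sh = (\<lambda>t::real. t + h)"
    have injsh: "inj_on sh A" for A by (auto simp: sh_def inj_on_def)
    have claim: "\<forall>U. U \<subseteq> P \<and> card U = k \<and> (\<forall>u\<in>U. \<forall>t\<in>P. u \<le> t \<longrightarrow> t \<in> U)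
        \<longrightarrow> DD ((P - U) \<union> sh ` U) f - DD P f \<in> K" for k
    proof (induct k)
      case 0
      show ?case
      proof (intro allI impI)
        fix U assume U: "U \<subseteq> P \<and> card U = 0 \<and> (\<forall>u\<in>U. \<forall>t\<in>P. u \<le> t \<longrightarrow> t \<in> U)"
        then have "U = {}" using P finite_subset by fastforce
        then show "DD ((P - U) \<union> sh ` U) f - DD P f \<in> K" using K by (simp add: convex_cone_contains_0)
      qed
    next
      case (Suc k)
      show ?case
      proof (intro allI impI)
        fix U assume U: "U \<subseteq> P \<and> card U = Suc k \<and> (\<forall>u\<in>U. \<forall>t\<in>P. u \<le> t \<longrightarrow> t \<in> U)"
        have fU: "finite U" using U P finite_subset by blast
        have Une: "U \<noteq> {}" using U by auto
        define u where "u = Min U"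
        have uU: "u \<in> U" using fU Une u_def by simp
        have umin: "\<And>v. v \<in> U \<Longrightarrow> u \<le> v" using fU u_def by simp
        define U' where "U' = U - {u}"
        have U'1: "U' \<subseteq> P \<and> card U' = k \<and> (\<forall>v\<in>U'. \<forall>t\<in>P. v \<le> t \<longrightarrow> t \<in> U')"
          using U uU umin fU unfolding U'_def by fastforce
        have IH: "DD ((P - U') \<union> sh ` U') f - DD P f \<in> K" using Suc U'1 by blast
        define B where "B = (P - U) \<union> sh ` U'"
        have uP: "u \<in> P" using U uU by blast
        have e1: "(P - U') \<union> sh ` U' = insert u B" using uP uU unfolding B_def U'_def by auto
        have e2: "(P - U) \<union> sh ` U = insert (u + h) B" using uU unfolding B_def U'_def sh_def by auto
        have unB: "u \<notin> B"
        proof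
          assume "u \<in> B"
          then show False unfolding B_def U'_def sh_def using uU umin hp by force
        qed
        have uhnB: "u + h \<notin> B"
        proof
          assume "u + h \<in> B"
          then show False unfolding B_def U'_def sh_def using uU U hp by force
        qed
        have fB: "finite B" using P fU unfolding B_def U'_def by auto
        have disj: "(P - U) \<inter> sh ` U' = {}"
          unfolding U'_def sh_def using U umin hp by force
        have "card U \<le> card P" using U P card_mono by blast
        then have cB: "card B = m"
          unfolding B_def using card_Un_disjoint[OF _ _ disj] P fU U U'1
            card_image[OF injsh[of U']] card_Diff_subset[of U P] finite_subset[of U' P]
          by simp
        have BI: "insert u (insert (u + h) B) \<subseteq> I"
          using P J U uP unfolding B_def U'_def sh_def by blast
        have "DD (insert u (insert (u + h) B)) f \<in> K"
          using cv fB cB BI unB uhnB hp unfolding convS_def by simp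
        then have "h *\<^sub>R DD (insert u (insert (u + h) B)) f \<in> K"
          using K h convex_cone_scaleR by blast
        then have "DD (insert (u + h) B) f - DD (insert u B) f \<in> K"
          using DD_rec[OF fB unB uhnB, of f] hp by (simp del: DD_def)
        from convex_cone_add[OF K this IH[unfolded e1]]
        show "DD ((P - U) \<union> sh ` U) f - DD P f \<in> K" unfolding e2 by simp
      qed
    qed
    have "DD (sh ` P) f - DD P f \<in> K" using claim[of "card P", rule_format, of P] by simp
    then show ?thesis unfolding DD_shift sh_def .
  qed
qed

lemma main:
  assumes K: "convex_cone K" and fS: "finite S"
  shows "\<forall>A f. convS K (card S) {0..A} f \<longrightarrow> (\<forall>i\<in>S. x i \<ge> 0) \<longrightarrow> sum x S \<le> A
     \<longrightarrow> (\<Sum>T\<in>Pow S. ((-1) ^ (card S - card T)) *\<^sub>R f (sum x T)) \<in> K"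
  using fS
proof (induct S rule: finite_induct)
  case empty
  show ?case
  proof (intro allI impI)
    fix A and f :: "real \<Rightarrow> 'a"
    assume c: "convS K (card {}) {0..A} f" and "sum x {} \<le> A"
    then have "0 \<le> A" by simp
    then have "DD {0} f \<in> K" using c unfolding convS_def by simp
    then show "(\<Sum>T\<in>Pow {}. ((-1) ^ (card {} - card T)) *\<^sub>R f (sum x T)) \<in> K"
      by (simp add: DD_def)
  qed
next
  case (insert a S)
  show ?case
  proof (intro allI impI)
    fix A and f :: "real \<Rightarrow> 'a"
    assume c: "convS K (card (insert a S)) {0..A} f" and xn: "\<forall>i\<in>insert a S. x i \<ge> 0"
      and sA: "sum x (insert a S) \<le> A"
    define g where "g t = f (t + x a) - f t" for t
    have cS: "card (insert a S) = Suc (card S)" using insert by simp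
    have sS: "0 \<le> sum x S" using xn by (simp add: sum_nonneg)
    have cg: "convS K (card S) {0..A - x a} g"
      unfolding g_def
      by (rule shift[OF K c[unfolded cS]]) (use xn sA insert in auto)
    have IH: "(\<Sum>T\<in>Pow S. ((-1) ^ (card S - card T)) *\<^sub>R g (sum x T)) \<in> K"
      using insert(3) cg xn sA insert by auto
    have inj: "inj_on (insert a) (Pow S)" using insert(2) by (auto simp: inj_on_def)
    have "(\<Sum>T\<in>Pow (insert a S). ((-1) ^ (card (insert a S) - card T)) *\<^sub>R f (sum x T)) =
      (\<Sum>T\<in>Pow S. ((-1) ^ (card (insert a S) - card T)) *\<^sub>R f (sum x T)) +
      (\<Sum>T\<in>Pow S. ((-1) ^ (card (insert a S) - card (insert a T))) *\<^sub>R f (sum x (insert a T)))"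
      unfolding Pow_insert
      by (subst sum.union_disjoint) (use insert(1,2) in \<open>auto simp: sum.reindex[OF inj]\<close>)
    also have "\<dots> = (\<Sum>T\<in>Pow S. ((-1) ^ (card S - card T)) *\<^sub>R g (sum x T))"
      unfolding sum.distrib[symmetric]
    proof (rule sum.cong[OF refl])
      fix T assume T: "T \<in> Pow S"
      have fT: "finite T" using T insert(1) finite_subset by auto
      have aT: "a \<notin> T" using T insert(2) by auto
      have le: "card T \<le> card S" using T insert(1) card_mono by auto
      have e: "Suc (card S) - card T = Suc (card S - card T)" using le by simp
      show "((-1) ^ (card (insert a S) - card T)) *\<^sub>R f (sum x T) +
         ((-1) ^ (card (insert a S) - card (insert a T))) *\<^sub>R f (sum x (insert a T)) =
         ((-1) ^ (card S - card T)) *\<^sub>R g (sum x T)"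
        unfolding cS using fT aT e by (simp add: g_def algebra_simps)
    qed
    finally show "(\<Sum>T\<in>Pow (insert a S). ((-1) ^ (card (insert a S) - card T)) *\<^sub>R f (sum x T)) \<in> K"
      using IH by simp
  qed
qed

theorem theorem3p1:
  fixes K :: "'a::banach set" and f :: "real \<Rightarrow> 'a" and A :: real and n :: nat
    and x :: "nat \<Rightarrow> real"
  assumes "ordered_banach_cone K"
    and "A > 0" and "n \<ge> 1"
    and "continuous_on {0..A} f"
    and "n_convex_on K n {0..A} f"
    and "\<forall>i\<in>{1..n}. x i \<ge> 0"
    and "(\<Sum>i=1..n. x i) \<le> A"
  shows "(\<Sum>S\<in>Pow {1..n}. ((-1) ^ (n - card S)) *\<^sub>R f (\<Sum>i\<in>S. x i)) \<in> K"
proof -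
  have K: "convex_cone K" using assms(1) unfolding ordered_banach_cone_def by blast
  have "convS K (card {1..n}) {0..A} f" using nconv_convS[OF assms(5)] by simp
  then show ?thesis using main[OF K, of "{1..n}" x] assms(6,7) by simp
qed

end
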